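(* Consider the normalised two-player, two-market Cournot game with per-period utility $u(x,a)=-2x(x+a)$ for a player playing $x$ against an opponent playing $a$. Let $c=-\frac{1}{1+\sqrt2}$ and let player 2's initial strategy be $a_0\in[-1,1]$. The players update alternately, each responding to the opponent's current strategy $a$ by switching to $c\,a$: at time $t=0$ player 1 updates (to $c\,a_0$), at $t=1$ player 2 updates (to $c^2a_0$), at $t=2$ player 1 updates, and so on. Let $u_t$ denote player 1's one-period utility at time $t$, evaluated at both players' strategies after the update at time $t$, and let $g=u_0=u(c\,a_0,a_0)$ be player 1's utility after the first move, measured relative to the equilibrium utility $0$. Then $$\sum_{t=0}^{\infty}u_t=\frac{(1+\sqrt2)\,g}{4},$$ which is strictly positive whenever $a_0\neq 0$.
   Context: Two players each have one unit of a homogeneous good (zero production and transportation cost) to split between two markets with inverse-linear demand. Strategies are normalised to numbers in $[-1,1]$ with $0$ the unique Cournot equilibrium split, and the normalised one-period utility (relative to the equilibrium utility, normalised to $0$) of a player playing $x$ against an opponent playing $a$ is $u(x,a)=-2x(x+a)$. The response rule $a\mapsto -\frac{a}{1+\sqrt2}$ is the one the paper calls the infinite time horizon optimal strategy. *)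

theory Defs
  imports Complex_Main
begin

definition util :: "real \<Rightarrow> real \<Rightarrow> real" where
  "util x a = -2 * x * (x + a)"

text \<open>The infinite-horizon optimal response coefficient.\<close>
definition copt :: real where
  "copt = - 1 / (1 + sqrt 2)"

text \<open>Strategy profile (player 1, player 2) after the update at time t,
  starting from player 2's initial strategy a0.\<close>
fun profile :: "real \<Rightarrow> nat \<Rightarrow> real \<times> real" where
  "profile a0 0 = (copt * a0, a0)"
| "profile a0 (Suc t) =
     (let (x, y) = profile a0 t in
      if even (Suc t) then (copt * y, y) else (x, copt * x))"

definition util1 :: "real \<Rightarrow> nat \<Rightarrow> real" where
  "util1 a0 t = util (fst (profile a0 t)) (snd (profile a0 t))"

end

theory Submission
  imports Defs
begin

lemma copt_eq: "copt = 1 - sqrt 2"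
proof -
  have "(1 + sqrt 2) * (1 - sqrt 2) = -1" by (simp add: algebra_simps)
  moreover have "1 + sqrt 2 > 0" by (smt (verit) real_sqrt_ge_zero)
  ultimately show ?thesis unfolding copt_def by (simp add: field_simps)
qed

lemma profile_closed:
  "profile a0 (2*k) = (copt^(2*k+1) * a0, copt^(2*k) * a0) \<and>
   profile a0 (2*k+1) = (copt^(2*k+1) * a0, copt^(2*k+2) * a0)"
proof (induction k)
  case 0
  then show ?case by simp
next
  case (Suc k)
  have e1: "2 * Suc k = Suc (2*k+1)" by simp
  have h1: "profile a0 (2 * Suc k) = (copt^(2*Suc k+1) * a0, copt^(2*Suc k) * a0)"
    unfolding e1 using Suc by (simp add: algebra_simps power_add)
  have e2: "2 * Suc k + 1 = Suc (2 * Suc k)" by simp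
  have "profile a0 (2 * Suc k + 1) = (copt^(2*Suc k+1) * a0, copt^(2*Suc k+2) * a0)"
    unfolding e2 using h1 by (simp add: algebra_simps power_add)
  with h1 show ?case by simp
qed

lemma util1_closed:
  fixes a0 :: real
  defines "g \<equiv> util (copt * a0) a0"
  shows "util1 a0 t = g/2 * ((1 + 1/copt) * (copt^2)^t + (1 - 1/copt) * (-(copt^2))^t)"
proof -
  have c0: "copt \<noteq> 0" unfolding copt_eq by simp
  have g: "g = -2 * a0^2 * copt * (copt + 1)" unfolding g_def util_def by (simp add: algebra_simps power2_eq_square)
  have q: "\<And>k. copt^(4*k) = copt^(2*k)*copt^(2*k)" by (simp flip: power_add)
  obtain k where "t = 2*k \<or> t = 2*k+1" by (metis oddE evenE)
  then show ?thesis
  proof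
    assume t: "t = 2*k"
    have p1: "(copt^2)^t = copt^(4*k)" unfolding t by (simp flip: power_mult)
    have p2: "(-(copt^2))^t = copt^(4*k)" unfolding t
      by (metis p1 t even_mult_iff even_numeral power_minus_even)
    have "util1 a0 t = -2 * (copt^(2*k+1) * a0) * (copt^(2*k+1) * a0 + copt^(2*k) * a0)"
      unfolding util1_def t using profile_closed[of a0 k] by (simp add: util_def)
    also have "\<dots> = -2 * a0^2 * copt * (copt + 1) * copt^(4*k)"
      unfolding q by (simp add: algebra_simps power_add power2_eq_square flip: power_mult)
    also have "\<dots> = g/2 * ((1 + 1/copt) * (copt^2)^t + (1 - 1/copt) * (-(copt^2))^t)"
      unfolding g p1 p2 using c0 by (simp add: field_simps)
    finally show ?thesis .
  next
    assume t: "t = 2*k+1"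
    have p1: "(copt^2)^t = copt^(4*k) * copt^2" unfolding t by (simp add: power_add flip: power_mult)
    have p2: "(-(copt^2))^t = - (copt^(4*k) * copt^2)" unfolding t
      by (simp add: power_add flip: power_mult)
    have "util1 a0 t = -2 * (copt^(2*k+1) * a0) * (copt^(2*k+1) * a0 + copt^(2*k+2) * a0)"
      unfolding util1_def t using profile_closed[of a0 k] by (simp add: util_def)
    also have "\<dots> = -2 * a0^2 * copt^2 * (copt + 1) * copt^(4*k)"
      unfolding q by (simp add: algebra_simps power_add power2_eq_square flip: power_mult)
    also have "\<dots> = g/2 * ((1 + 1/copt) * (copt^2)^t + (1 - 1/copt) * (-(copt^2))^t)"
      unfolding g p1 p2 using c0 by (simp add: field_simps power2_eq_square)
    finally show ?thesis .
  qed
qed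

lemma sqrt2_lt2: "sqrt 2 < 2"
proof -
  show ?thesis by (rule real_less_lsqrt) simp_all
qed

lemma value_eq:
  "(1 + 1/copt) * (1 / (1 - copt^2)) + (1 - 1/copt) * (1 / (1 - - (copt^2))) = (1 + sqrt 2) / 2"
proof -
  define c where "c = copt"
  have s2: "sqrt 2 * sqrt 2 = 2" by simp
  have c: "c = 1 - sqrt 2" unfolding c_def copt_eq ..
  have sgt: "sqrt 2 > 1" by simp
  have slt: "sqrt 2 < 2" using sqrt2_lt2 by simp
  have c0: "c \<noteq> 0" "c \<noteq> 1" "c \<noteq> -1" using c sgt slt by auto
  have d1: "1 - c^2 \<noteq> 0" using c0 by (metis eq_iff_diff_eq_0 power2_eq_1_iff)
  have d2: "1 + c^2 \<noteq> 0" by (smt (verit) zero_le_power2)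
  have e1: "(1 + 1/c) * (1 / (1 - c^2)) = 1 / (c*(1-c))"
    using c0 d1 by (simp add: field_simps power2_eq_square)
  have e2: "(1 - 1/c) * (1 / (1 - - (c^2))) = (c - 1) / (c*(1+c^2))"
    using c0 d2 by (simp add: field_simps)
  have e3: "1 / (c*(1-c)) + (c - 1) / (c*(1+c^2)) = 2 / ((1-c)*(1+c^2))"
  proof -
    have nz: "1 - c \<noteq> 0" "c*(1-c) \<noteq> 0" "c*(1+c^2) \<noteq> 0" "(1-c)*(1+c^2) \<noteq> 0" using c0 d2 by auto
    have "1 / (c*(1-c)) + (c - 1) / (c*(1+c^2)) = ((1+c^2) + (c-1)*(1-c)) / (c*(1-c)*(1+c^2))"
    proof -
      have f1: "1/(c*(1-c)) = (1+c^2)/(c*(1-c)*(1+c^2))" using nz d2 by simp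
      have f2: "(c - 1)/(c*(1+c^2)) = (c-1)*(1-c)/(c*(1-c)*(1+c^2))" using nz
      proof -
        have "(c - 1)/(c*(1+c^2)) = ((1-c)*(c-1))/((1-c)*(c*(1+c^2)))"
          using nz(1) by (rule mult_divide_mult_cancel_left[symmetric])
        also have "\<dots> = (c-1)*(1-c)/(c*(1-c)*(1+c^2))" by (simp add: mult.commute mult.left_commute)
        finally show ?thesis .
      qed
      show ?thesis unfolding f1 f2 by (simp add: add_divide_distrib)
    qed
    also have "(1+c^2) + (c-1)*(1-c) = 2 * c" by (simp add: algebra_simps power2_eq_square)
    also have "2 * c / (c*(1-c)*(1+c^2)) = 2 / ((1-c)*(1+c^2))" using c0 by (simp add: mult.assoc)
    finally show ?thesis .
  qed
  have "(1 + 1/c) * (1 / (1 - c^2)) + (1 - 1/c) * (1 / (1 - - (c^2))) = 2 / ((1-c)*(1+c^2))"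
    unfolding e1 e2 e3 ..
  also have "(1-c)*(1+c^2) = 4 * (sqrt 2 - 1)" unfolding c
    by (simp add: algebra_simps power2_eq_square s2)
  also have "2 / (4 * (sqrt 2 - 1)) = (1 + sqrt 2)/2"
    using sgt by (simp add: field_simps algebra_simps s2)
  finally show ?thesis unfolding c_def .
qed

theorem theorem5:
  fixes a0 :: real
  assumes "a0 \<in> {-1..1}"
  defines "g \<equiv> util (copt * a0) a0"
  shows "(util1 a0) sums ((1 + sqrt 2) * g / 4) \<and> (a0 \<noteq> 0 \<longrightarrow> (1 + sqrt 2) * g / 4 > 0)"
proof
  have sgt: "sqrt 2 > 1" by simp
  have slt: "sqrt 2 < 2" using sqrt2_lt2 by simp
  have "copt^2 = 3 - 2 * sqrt 2" unfolding copt_eq by (simp add: power2_eq_square algebra_simps)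
  moreover have "\<bar>3 - 2 * sqrt 2\<bar> < 1" using sgt slt by (simp only: abs_less_iff) linarith
  ultimately have cabs: "norm (copt^2) < 1" and cabs2: "norm (-(copt^2)) < 1" by (simp_all only: norm_minus_cancel real_norm_def)
  have "(\<lambda>t. g/2 * ((1 + 1/copt) * (copt^2)^t + (1 - 1/copt) * (-(copt^2))^t)) sums
        (g/2 * ((1 + 1/copt) * (1 / (1 - copt^2)) + (1 - 1/copt) * (1 / (1 - - (copt^2)))))"
    by (rule sums_mult, rule sums_add; rule sums_mult, rule geometric_sums, rule cabs cabs2)
  then have h: "(\<lambda>t. g/2 * ((1 + 1/copt) * (copt^2)^t + (1 - 1/copt) * (-(copt^2))^t)) sums (g/2 * ((1 + sqrt 2)/2))"
    unfolding value_eq .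
  have eq: "g/2 * ((1 + sqrt 2)/2) = (1 + sqrt 2) * g / 4" by simp
  have fe: "util1 a0 = (\<lambda>t. g/2 * ((1 + 1/copt) * (copt^2)^t + (1 - 1/copt) * (-(copt^2))^t))"
    unfolding g_def by (rule ext) (rule util1_closed)
  show "(util1 a0) sums ((1 + sqrt 2) * g / 4)"
    unfolding fe using h unfolding eq .
  show "a0 \<noteq> 0 \<longrightarrow> (1 + sqrt 2) * g / 4 > 0"
  proof
    assume a: "a0 \<noteq> 0"
    have g: "g = 2 * a0^2 * (sqrt 2 - 1) * (2 - sqrt 2)" unfolding g_def util_def copt_eq
      by (simp add: algebra_simps power2_eq_square)
    have "sqrt 2 - 1 > 0" "2 - sqrt 2 > 0" "a0^2 > 0" using a by (simp_all add: real_sqrt_less_iff)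
    (use sqrt2_lt2 in simp)
    then have "g > 0" unfolding g by simp
    moreover have "1 + sqrt 2 > 0" by (simp add: add_pos_nonneg)
    ultimately show "(1 + sqrt 2) * g / 4 > 0" by simp
  qed
qed

end
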